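(* Let $\mathcal H(t)=\sum_{n\ge1}h_nt^n$, where $h_n$ is the number of bicoloured noncrossing configurations of size $n$. Then $$-t-t^2+(1-4t)\mathcal H(t)-3\mathcal H(t)^2=0.$$
   Context: For $n\ge2$, a bicoloured noncrossing configuration (BNC) of size $n$ is a regular polygon with vertices $1,\dots,n+1$ numbered clockwise, together with two disjoint sets of arcs, blue and red. The arcs are the pairs $(i,j)$, $1\le i<j\le n+1$: the edges are $(i,i+1)$, the base is $(1,n+1)$, and the others are diagonals. Coloured (blue or red) arcs must be pairwise noncrossing, where $(i,j)$ and $(k,l)$ cross iff $i<k<j<l$ or $k<i<l<j$. Every red arc must be a diagonal. Arcs in neither set are uncoloured. By convention there is exactly one BNC of size $1$. *)

theory Defs
  imports "HOL-Computational_Algebra.Formal_Power_Series"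
begin

text \<open>Arcs of the polygon with vertices 1..n+1: pairs (i,j) with 1 <= i < j <= n+1.\<close>
definition arcs :: "nat \<Rightarrow> (nat \<times> nat) set" where
  "arcs n = {(i, j). 1 \<le> i \<and> i < j \<and> j \<le> n + 1}"

text \<open>Diagonals: arcs that are neither edges (i,i+1) nor the base (1,n+1).\<close>
definition diagonals :: "nat \<Rightarrow> (nat \<times> nat) set" where
  "diagonals n = {(i, j) \<in> arcs n. j \<noteq> i + 1 \<and> (i, j) \<noteq> (1, n + 1)}"

definition crosses :: "nat \<times> nat \<Rightarrow> nat \<times> nat \<Rightarrow> bool" where
  "crosses a b = (case a of (i, j) \<Rightarrow> case b of (k, l) \<Rightarrow>
      (i < k \<and> k < j \<and> j < l) \<or> (k < i \<and> i < l \<and> l < j))"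

definition noncrossing :: "(nat \<times> nat) set \<Rightarrow> bool" where
  "noncrossing S = (\<forall>a\<in>S. \<forall>b\<in>S. \<not> crosses a b)"

definition BNC :: "nat \<Rightarrow> ((nat \<times> nat) set \<times> (nat \<times> nat) set) set" where
  "BNC n = {(B, R). B \<subseteq> arcs n \<and> R \<subseteq> diagonals n \<and> B \<inter> R = {}
                    \<and> noncrossing (B \<union> R)}"

text \<open>h n: number of BNCs of size n; by convention h 1 = 1 (h 0 is unused).\<close>
definition h :: "nat \<Rightarrow> nat" where
  "h n = (if n = 0 then 0 else if n = 1 then 1 else card (BNC n))"

definition H :: "int fps" where
  "H = Abs_fps (\<lambda>n. if n = 0 then 0 else int (h n))"

end

theory Submission
  imports Defs
begin


definition In :: "nat \<Rightarrow> nat \<Rightarrow> (nat \<times> nat) set" where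
  "In a b = {(i, j). a \<le> i \<and> i < j \<and> j \<le> b}"
definition inner :: "nat \<Rightarrow> nat \<Rightarrow> (nat \<times> nat) set" where
  "inner a b = In a b - {(a, b)}"
definition nonedge :: "(nat \<times> nat) set" where
  "nonedge = {(i, j). j \<noteq> i + 1}"
definition Cf :: "(nat \<times> nat) set \<Rightarrow> (nat \<times> nat) set \<Rightarrow> ((nat \<times> nat) set \<times> (nat \<times> nat) set) set" where
  "Cf A D = {(B, R). B \<subseteq> A \<and> R \<subseteq> D \<and> B \<inter> R = {} \<and> noncrossing (B \<union> R)}"
definition Conf :: "nat \<Rightarrow> nat \<Rightarrow> ((nat \<times> nat) set \<times> (nat \<times> nat) set) set" where
  "Conf a b = Cf (inner a b) (inner a b \<inter> nonedge)"

lemma In_finite: "finite (In a b)"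
proof -
  have "In a b \<subseteq> {a..b} \<times> {a..b}" by (auto simp: In_def)
  then show ?thesis by (rule finite_subset) auto
qed

lemma crosses_self: "\<not> crosses e e"
  by (cases e) (auto simp: crosses_def)

lemma noncrossing_insert:
  "noncrossing (insert e S) \<longleftrightarrow> noncrossing S \<and> (\<forall>x\<in>S. \<not> crosses e x \<and> \<not> crosses x e)"
  using crosses_self by (auto simp: noncrossing_def)

lemma noncrossing_mono: "noncrossing S \<Longrightarrow> T \<subseteq> S \<Longrightarrow> noncrossing T"
  by (auto simp: noncrossing_def)

lemma Cf_finite:
  assumes "finite A" "D \<subseteq> A" shows "finite (Cf A D)"
proof -
  have "Cf A D \<subseteq> Pow A \<times> Pow D" by (auto simp: Cf_def)
  moreover have "finite (Pow A \<times> Pow D)" using assms finite_subset by blast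
  ultimately show ?thesis by (rule finite_subset)
qed

locale addarc =
  fixes e :: "nat \<times> nat" and A D :: "(nat \<times> nat) set"
  assumes fin: "finite A" and DA: "D \<subseteq> A" and eA: "e \<notin> A"
    and nc: "\<forall>x\<in>A. \<not> crosses e x \<and> \<not> crosses x e"
begin

definition blue where "blue = (\<lambda>(B, R). (insert e B, R)) ` Cf A D"
definition red where "red = (\<lambda>(B, R). (B, insert e R)) ` Cf A D"

lemma eD: "e \<notin> D" using DA eA by blast

lemma card_blue: "card blue = card (Cf A D)"
  unfolding blue_def
proof (rule card_image, rule inj_onI)
  fix x y assume "x \<in> Cf A D" "y \<in> Cf A D"
    "(case x of (B, R) \<Rightarrow> (insert e B, R)) = (case y of (B, R) \<Rightarrow> (insert e B, R))"
  then show "x = y" using eA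
    by (cases x; cases y) (auto simp: Cf_def insert_ident)
qed

lemma card_red: "card red = card (Cf A D)"
  unfolding red_def
proof (rule card_image, rule inj_onI)
  fix x y assume "x \<in> Cf A D" "y \<in> Cf A D"
    "(case x of (B, R) \<Rightarrow> (B, insert e R)) = (case y of (B, R) \<Rightarrow> (B, insert e R))"
  then show "x = y" using eD
    by (cases x; cases y) (auto simp: Cf_def insert_ident)
qed

lemma fin_Cf: "finite (Cf A D)" using Cf_finite fin DA by blast
lemma fin_blue: "finite blue" using fin_Cf by (simp add: blue_def)
lemma fin_red: "finite red" using fin_Cf by (simp add: red_def)

lemma nc_ins: "B \<union> R \<subseteq> A \<Longrightarrow> noncrossing (B \<union> R) \<Longrightarrow> noncrossing (insert e (B \<union> R))"
  using nc by (auto simp: noncrossing_insert)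

lemma disj1: "Cf A D \<inter> blue = {}" using eA by (auto simp: Cf_def blue_def)
lemma disj2: "(Cf A D \<union> blue) \<inter> red = {}" using eA eD by (auto simp: Cf_def blue_def red_def)
lemma disj3: "blue \<inter> red = {}" using eA eD by (auto simp: Cf_def blue_def red_def)

lemma split2: "Cf (insert e A) D = Cf A D \<union> blue"
proof
  show "Cf (insert e A) D \<subseteq> Cf A D \<union> blue"
  proof
    fix x assume x: "x \<in> Cf (insert e A) D"
    obtain B R where xBR: "x = (B, R)" by (cases x)
    show "x \<in> Cf A D \<union> blue"
    proof (cases "e \<in> B")
      case False
      then show ?thesis using x xBR by (auto simp: Cf_def)
    next
      case True
      have "(B - {e}, R) \<in> Cf A D" using x xBR
        by (auto simp: Cf_def intro: noncrossing_mono)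
      moreover have "x = (insert e (B - {e}), R)" using True xBR by auto
      ultimately have "x \<in> blue" unfolding blue_def by (simp add: rev_image_eqI)
      then show ?thesis by blast
    qed
  qed
next
  show "Cf A D \<union> blue \<subseteq> Cf (insert e A) D"
    using eD DA nc_ins by (auto simp: Cf_def blue_def)
qed

lemma split3: "Cf (insert e A) (insert e D) = Cf A D \<union> blue \<union> red"
proof
  show "Cf (insert e A) (insert e D) \<subseteq> Cf A D \<union> blue \<union> red"
  proof
    fix x assume x: "x \<in> Cf (insert e A) (insert e D)"
    obtain B R where xBR: "x = (B, R)" by (cases x)
    show "x \<in> Cf A D \<union> blue \<union> red"
    proof (cases "e \<in> B")
      case True
      have "(B - {e}, R) \<in> Cf A D" using x xBR True eD
        by (auto simp: Cf_def intro: noncrossing_mono)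
      moreover have "x = (insert e (B - {e}), R)" using True xBR by auto
      ultimately have "x \<in> blue" unfolding blue_def by (simp add: rev_image_eqI)
      then show ?thesis by blast
    next
      case False
      show ?thesis
      proof (cases "e \<in> R")
        case True
        have "(B, R - {e}) \<in> Cf A D" using x xBR False
          by (auto simp: Cf_def intro: noncrossing_mono)
        moreover have "x = (B, insert e (R - {e}))" using True xBR by auto
        ultimately have "x \<in> red" unfolding red_def by (simp add: rev_image_eqI)
        then show ?thesis by blast
      next
        case False
        then show ?thesis using x xBR \<open>e \<notin> B\<close> by (auto simp: Cf_def)
      qed
    qed
  qed
next
  show "Cf A D \<union> blue \<union> red \<subseteq> Cf (insert e A) (insert e D)"
    using eD eA DA nc_ins by (auto simp: Cf_def blue_def red_def)
qed

lemma card2: "card (Cf (insert e A) D) = 2 * card (Cf A D)"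
  unfolding split2 using card_Un_disjoint[OF fin_Cf fin_blue disj1] card_blue by simp

lemma card3: "card (Cf (insert e A) (insert e D)) = 3 * card (Cf A D)"
  unfolding split3
  using card_Un_disjoint[OF _ fin_red disj2] card_Un_disjoint[OF fin_Cf fin_blue disj1]
    card_blue card_red fin_Cf fin_blue by simp

lemma colored: "{x \<in> Cf (insert e A) (insert e D). e \<in> fst x \<union> snd x} = blue \<union> red"
  unfolding split3 using eA DA by (auto simp: Cf_def blue_def red_def)

lemma card_colored: "card {x \<in> Cf (insert e A) (insert e D). e \<in> fst x \<union> snd x} = 2 * card (Cf A D)"
  unfolding colored using card_Un_disjoint[OF fin_blue fin_red disj3] card_blue card_red by simp

end


lemma In_insert: "a < b \<Longrightarrow> In a b = insert (a, b) (inner a b)"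
  by (auto simp: In_def inner_def)

lemma inner_notin: "(a, b) \<notin> inner a b" by (simp add: inner_def)

lemma inner_nc: "\<forall>x\<in>inner a b. \<not> crosses (a, b) x \<and> \<not> crosses x (a, b)"
  by (auto simp: inner_def In_def crosses_def)

lemma inner_fin: "finite (inner a b)" using In_finite by (simp add: inner_def)

lemma addarc_inner: "addarc (a, b) (inner a b) (inner a b \<inter> nonedge)"
  by (unfold_locales) (auto simp: inner_fin inner_notin inner_nc)

lemma Conf_card_pos1: "card (Conf a (Suc a)) = 1"
proof -
  have "inner a (Suc a) = {}" by (auto simp: inner_def In_def)
  then have "Conf a (Suc a) = {({}, {})}" by (auto simp: Conf_def Cf_def noncrossing_def)
  then show ?thesis by simp
qed

definition Lset :: "nat \<Rightarrow> nat \<Rightarrow> ((nat \<times> nat) set \<times> (nat \<times> nat) set) set" where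
  "Lset a k = {x \<in> Cf (In a k) (In a k \<inter> nonedge). k = Suc a \<or> (a, k) \<in> fst x \<union> snd x}"
definition Rset :: "nat \<Rightarrow> nat \<Rightarrow> ((nat \<times> nat) set \<times> (nat \<times> nat) set) set" where
  "Rset k b = Cf (In k b) (In k b \<inter> nonedge)"

lemma card_Lset: assumes "a < k" shows "card (Lset a k) = 2 * card (Conf a k)"
proof (cases "k = Suc a")
  case True
  have 1: "In a k \<inter> nonedge = inner a k \<inter> nonedge" using True
    by (auto simp: In_def inner_def nonedge_def)
  have "Lset a k = Cf (insert (a,k) (inner a k)) (inner a k \<inter> nonedge)"
    using True In_insert[OF assms] 1 by (simp add: Lset_def)
  then show ?thesis using addarc.card2[OF addarc_inner] by (simp add: Conf_def)
next
  case False
  have 1: "In a k \<inter> nonedge = insert (a,k) (inner a k \<inter> nonedge)" using False assms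
    by (auto simp: In_def inner_def nonedge_def)
  have "Lset a k = {x \<in> Cf (insert (a,k) (inner a k)) (insert (a,k) (inner a k \<inter> nonedge)). (a, k) \<in> fst x \<union> snd x}"
    using False In_insert[OF assms] 1 by (simp add: Lset_def)
  then show ?thesis using addarc.card_colored[OF addarc_inner] by (simp add: Conf_def)
qed

lemma card_Rset: assumes "k < b" shows "card (Rset k b) = (if b = Suc k then 2 else 3) * card (Conf k b)"
proof (cases "b = Suc k")
  case True
  have 1: "In k b \<inter> nonedge = inner k b \<inter> nonedge" using True
    by (auto simp: In_def inner_def nonedge_def)
  have "Rset k b = Cf (insert (k,b) (inner k b)) (inner k b \<inter> nonedge)"
    using True In_insert[OF assms] 1 by (simp add: Rset_def)
  then show ?thesis using addarc.card2[OF addarc_inner] True by (simp add: Conf_def)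
next
  case False
  have 1: "In k b \<inter> nonedge = insert (k,b) (inner k b \<inter> nonedge)" using False assms
    by (auto simp: In_def inner_def nonedge_def)
  have "Rset k b = Cf (insert (k,b) (inner k b)) (insert (k,b) (inner k b \<inter> nonedge))"
    using False In_insert[OF assms] 1 by (simp add: Rset_def)
  then show ?thesis using addarc.card3[OF addarc_inner] False by (simp add: Conf_def)
qed


definition Sk :: "nat \<Rightarrow> nat \<Rightarrow> nat \<Rightarrow> ((nat \<times> nat) set \<times> (nat \<times> nat) set) set" where
  "Sk a b k = {x \<in> Conf a b. (k = Suc a \<or> (a, k) \<in> fst x \<union> snd x)
      \<and> (\<forall>j. k < j \<and> j < b \<longrightarrow> (a, j) \<notin> fst x \<union> snd x)}"

lemma Sk_arcs:
  assumes x: "x \<in> Sk a b k" and k: "a < k" "k < b" and ij: "(i, j) \<in> fst x \<union> snd x"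
  shows "(i, j) \<in> In a k \<union> In k b"
proof -
  have sub: "fst x \<union> snd x \<subseteq> inner a b" and ncx: "noncrossing (fst x \<union> snd x)"
    using x by (auto simp: Sk_def Conf_def Cf_def)
  have ij2: "a \<le> i" "i < j" "j \<le> b" "(i, j) \<noteq> (a, b)" using ij sub by (auto simp: inner_def In_def)
  show ?thesis
  proof (rule ccontr)
    assume "(i, j) \<notin> In a k \<union> In k b"
    then have ikj: "i < k" "k < j" using ij2 by (auto simp: In_def)
    show False
    proof (cases "i = a")
      case True
      then have "j < b" using ij2 by auto
      then show False using x ikj True ij by (auto simp: Sk_def)
    next
      case False
      then have "k \<noteq> Suc a" using ikj ij2 by auto
      then have "(a, k) \<in> fst x \<union> snd x" using x by (auto simp: Sk_def)
      moreover have "crosses (a, k) (i, j)" using False ij2 ikj by (auto simp: crosses_def)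
      ultimately show False using ncx ij by (auto simp: noncrossing_def)
    qed
  qed
qed

lemma In_disj: "In a k \<inter> In k b = {}" by (auto simp: In_def)

lemma In_nc: "p \<in> In a k \<Longrightarrow> q \<in> In k b \<Longrightarrow> \<not> crosses p q \<and> \<not> crosses q p"
  by (cases p; cases q) (auto simp: In_def crosses_def)

definition gl :: "((nat \<times> nat) set \<times> (nat \<times> nat) set) \<times> ((nat \<times> nat) set \<times> (nat \<times> nat) set)
   \<Rightarrow> (nat \<times> nat) set \<times> (nat \<times> nat) set" where
  "gl p = (fst (fst p) \<union> fst (snd p), snd (fst p) \<union> snd (snd p))"

lemma Sk_image:
  assumes k: "a < k" "k < b"
  shows "Sk a b k = gl ` (Lset a k \<times> Rset k b)"
proof
  show "Sk a b k \<subseteq> gl ` (Lset a k \<times> Rset k b)"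
  proof
    fix x assume x: "x \<in> Sk a b k"
    obtain B R where xBR: "x = (B, R)" by (cases x)
    have Cx: "B \<subseteq> inner a b" "R \<subseteq> inner a b \<inter> nonedge" "B \<inter> R = {}" "noncrossing (B \<union> R)"
      using x xBR by (auto simp: Sk_def Conf_def Cf_def)
    have cov: "B \<union> R \<subseteq> In a k \<union> In k b" using Sk_arcs[OF x k] xBR by auto
    let ?L = "(B \<inter> In a k, R \<inter> In a k)" and ?R = "(B \<inter> In k b, R \<inter> In k b)"
    have "?L \<in> Lset a k"
    proof -
      have "k = Suc a \<or> (a, k) \<in> B \<union> R" using x xBR by (auto simp: Sk_def)
      moreover have "(a, k) \<in> In a k" using k by (auto simp: In_def)
      ultimately show ?thesis using Cx unfolding Lset_def Cf_def
        by (auto intro: noncrossing_mono)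
    qed
    moreover have "?R \<in> Rset k b" using Cx unfolding Rset_def Cf_def
      by (auto intro: noncrossing_mono)
    moreover have "x = gl (?L, ?R)" using cov xBR by (auto simp: gl_def)
    ultimately show "x \<in> gl ` (Lset a k \<times> Rset k b)" by blast
  qed
next
  show "gl ` (Lset a k \<times> Rset k b) \<subseteq> Sk a b k"
  proof
    fix y assume "y \<in> gl ` (Lset a k \<times> Rset k b)"
    then obtain B1 R1 B2 R2 where L: "(B1, R1) \<in> Lset a k" and R: "(B2, R2) \<in> Rset k b"
      and y: "y = (B1 \<union> B2, R1 \<union> R2)" by (auto simp: gl_def)
    have L1: "B1 \<subseteq> In a k" "R1 \<subseteq> In a k \<inter> nonedge" "B1 \<inter> R1 = {}" "noncrossing (B1 \<union> R1)"
      "k = Suc a \<or> (a, k) \<in> B1 \<union> R1"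
      using L by (auto simp: Lset_def Cf_def)
    have R1: "B2 \<subseteq> In k b" "R2 \<subseteq> In k b \<inter> nonedge" "B2 \<inter> R2 = {}" "noncrossing (B2 \<union> R2)"
      using R by (auto simp: Rset_def Cf_def)
    have s1: "In a k \<subseteq> inner a b" "In k b \<subseteq> inner a b" using k by (auto simp: In_def inner_def)
    have nc: "noncrossing ((B1 \<union> B2) \<union> (R1 \<union> R2))"
      unfolding noncrossing_def
    proof (intro ballI)
      fix p q assume p: "p \<in> B1 \<union> B2 \<union> (R1 \<union> R2)" and q: "q \<in> B1 \<union> B2 \<union> (R1 \<union> R2)"
      consider "p \<in> B1 \<union> R1" "q \<in> B1 \<union> R1" | "p \<in> B1 \<union> R1" "q \<in> B2 \<union> R2"
        | "p \<in> B2 \<union> R2" "q \<in> B1 \<union> R1" | "p \<in> B2 \<union> R2" "q \<in> B2 \<union> R2" using p q by blast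
      then show "\<not> crosses p q"
      proof cases
        case 1 then show ?thesis using L1(4) by (auto simp: noncrossing_def)
      next
        case 2 then show ?thesis using L1(1,2) R1(1,2) In_nc by blast
      next
        case 3 then show ?thesis using L1(1,2) R1(1,2) In_nc by blast
      next
        case 4 then show ?thesis using R1(4) by (auto simp: noncrossing_def)
      qed
    qed
    have dj: "(B1 \<union> B2) \<inter> (R1 \<union> R2) = {}" using L1 R1 In_disj[of a k b] by blast
    have nj: "\<forall>j. k < j \<and> j < b \<longrightarrow> (a, j) \<notin> B1 \<union> B2 \<union> (R1 \<union> R2)"
      using L1(1,2) R1(1,2) k by (auto simp: In_def)
    show "y \<in> Sk a b k" unfolding y Sk_def Conf_def Cf_def
      using L1 R1 s1 nc dj nj by auto
  qed
qed

lemma gl_inj: "inj_on gl (Lset a k \<times> Rset k b)"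
proof (rule inj_onI)
  fix p q assume p: "p \<in> Lset a k \<times> Rset k b" and q: "q \<in> Lset a k \<times> Rset k b" and e: "gl p = gl q"
  have sub: "\<And>r. r \<in> Lset a k \<times> Rset k b \<Longrightarrow> fst (fst r) \<union> snd (fst r) \<subseteq> In a k \<and> fst (snd r) \<union> snd (snd r) \<subseteq> In k b"
    by (auto simp: Lset_def Rset_def Cf_def)
  have D: "In a k \<inter> In k b = {}" by (rule In_disj)
  have "fst (fst p) = fst (gl p) \<inter> In a k" "snd (fst p) = snd (gl p) \<inter> In a k"
       "fst (snd p) = fst (gl p) \<inter> In k b" "snd (snd p) = snd (gl p) \<inter> In k b"
    using sub[OF p] D by (auto simp: gl_def)
  moreover have "fst (fst q) = fst (gl q) \<inter> In a k" "snd (fst q) = snd (gl q) \<inter> In a k"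
       "fst (snd q) = fst (gl q) \<inter> In k b" "snd (snd q) = snd (gl q) \<inter> In k b"
    using sub[OF q] D by (auto simp: gl_def)
  ultimately show "p = q" using e by (metis prod.expand)
qed

lemma card_Sk: assumes "a < k" "k < b"
  shows "card (Sk a b k) = 2 * card (Conf a k) * ((if b = Suc k then 2 else 3) * card (Conf k b))"
proof -
  have "card (Sk a b k) = card (Lset a k \<times> Rset k b)"
    unfolding Sk_image[OF assms] by (rule card_image[OF gl_inj])
  also have "\<dots> = card (Lset a k) * card (Rset k b)" by (rule card_cartesian_product)
  finally show ?thesis by (simp only: card_Lset[OF assms(1)] card_Rset[OF assms(2)])
qed

lemma Conf_union: assumes "Suc a < b" shows "Conf a b = (\<Union>k\<in>{Suc a..<b}. Sk a b k)"
proof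
  show "Conf a b \<subseteq> (\<Union>k\<in>{Suc a..<b}. Sk a b k)"
  proof
    fix x assume x: "x \<in> Conf a b"
    define K where "K = {k. Suc a \<le> k \<and> k < b \<and> (k = Suc a \<or> (a, k) \<in> fst x \<union> snd x)}"
    have fK: "finite K"
    proof (rule finite_subset[of _ "{..<b}"])
      show "K \<subseteq> {..<b}" unfolding K_def by blast
    qed simp
    have nK: "Suc a \<in> K" using assms unfolding K_def by blast
    define k where "k = Max K"
    have kK: "k \<in> K" using fK nK Max_in unfolding k_def by blast
    have kmax: "\<And>j. j \<in> K \<Longrightarrow> j \<le> k" using fK unfolding k_def by simp
    have k1: "Suc a \<le> k" "k < b" "k = Suc a \<or> (a, k) \<in> fst x \<union> snd x" using kK unfolding K_def by blast+
    have k2: "\<forall>j. k < j \<and> j < b \<longrightarrow> (a, j) \<notin> fst x \<union> snd x"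
    proof (intro allI impI)
      fix j assume j: "k < j \<and> j < b"
      show "(a, j) \<notin> fst x \<union> snd x"
      proof
        assume "(a, j) \<in> fst x \<union> snd x"
        then have "j \<in> K" using j k1 unfolding K_def by simp
        then have "j \<le> k" by (rule kmax)
        then show False using j by simp
      qed
    qed
    have "x \<in> Sk a b k" unfolding Sk_def using x k1(3) k2 by blast
    moreover have "k \<in> {Suc a..<b}" using k1 by simp
    ultimately show "x \<in> (\<Union>k\<in>{Suc a..<b}. Sk a b k)" by blast
  qed
next
  show "(\<Union>k\<in>{Suc a..<b}. Sk a b k) \<subseteq> Conf a b" unfolding Sk_def by blast
qed

lemma Sk_disj: assumes "k \<in> {Suc a..<b}" "k' \<in> {Suc a..<b}" "k \<noteq> k'"
  shows "Sk a b k \<inter> Sk a b k' = {}"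
proof -
  { fix k k' assume "k \<in> {Suc a..<b}" "k' \<in> {Suc a..<b}" "k < k'"
    then have "Sk a b k \<inter> Sk a b k' = {}" by (auto simp: Sk_def) }
  note * = this
  show ?thesis
    using assms *[of k k'] *[of k' k] by (cases "k < k'") (auto simp: Int_commute)
qed

lemma Conf_fin: "finite (Conf a b)"
  unfolding Conf_def by (rule Cf_finite) (auto simp: inner_fin)

lemma card_Conf_rec: assumes "Suc a < b"
  shows "card (Conf a b) = (\<Sum>k\<in>{Suc a..<b}. 2 * card (Conf a k) * ((if b = Suc k then 2 else 3) * card (Conf k b)))"
proof -
  have "card (Conf a b) = (\<Sum>k\<in>{Suc a..<b}. card (Sk a b k))"
    unfolding Conf_union[OF assms]
  proof (rule card_UN_disjoint)
    show "finite {Suc a..<b}" by simp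
    show "\<forall>i\<in>{Suc a..<b}. finite (Sk a b i)"
      using finite_subset[OF _ Conf_fin[of a b]] by (auto simp: Sk_def)
    show "\<forall>i\<in>{Suc a..<b}. \<forall>j\<in>{Suc a..<b}. i \<noteq> j \<longrightarrow> Sk a b i \<inter> Sk a b j = {}"
      using Sk_disj by blast
  qed
  also have "\<dots> = (\<Sum>k\<in>{Suc a..<b}. 2 * card (Conf a k) * ((if b = Suc k then 2 else 3) * card (Conf k b)))"
    by (rule sum.cong) (auto simp: card_Sk)
  finally show ?thesis .
qed

unbundle fps_syntax

function Fr :: "nat \<Rightarrow> nat" where
  "Fr n = (if n \<le> 1 then n else (\<Sum>k\<in>{1..<n}. 2 * Fr k * ((if n = Suc k then 2 else 3) * Fr (n - k))))"
  by pat_completeness auto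
termination by (relation "measure id") auto

declare Fr.simps[simp del]

lemma Fr_0: "Fr 0 = 0" by (subst Fr.simps) simp
lemma Fr_1: "Fr 1 = 1" by (subst Fr.simps) simp
lemma Fr_Suc0: "Fr (Suc 0) = Suc 0" by (subst Fr.simps) simp
lemma Fr_rec: "2 \<le> n \<Longrightarrow> Fr n = (\<Sum>k\<in>{1..<n}. 2 * Fr k * ((if n = Suc k then 2 else 3) * Fr (n - k)))"
  by (subst Fr.simps) simp

lemma card_Conf_Fr_aux: "\<forall>a b. b - a = m \<longrightarrow> a < b \<longrightarrow> card (Conf a b) = Fr m"
proof (induction m rule: less_induct)
  case (less m)
  show ?case
  proof (intro allI impI)
    fix a b assume m: "b - a = m" and ab: "a < b"
    show "card (Conf a b) = Fr m"
    proof (cases "m = 1")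
      case True
      then have "b = Suc a" using m ab by simp
      then show ?thesis using True Conf_card_pos1 Fr_1 by simp
    next
      case False
      then have m2: "2 \<le> m" and sab: "Suc a < b" using m ab by auto
      have "card (Conf a b) = (\<Sum>k\<in>{Suc a..<b}. 2 * card (Conf a k) * ((if b = Suc k then 2 else 3) * card (Conf k b)))"
        by (rule card_Conf_rec[OF sab])
      also have "\<dots> = (\<Sum>k\<in>{Suc a..<b}. 2 * Fr (k - a) * ((if b = Suc k then 2 else 3) * Fr (b - k)))"
      proof (rule sum.cong[OF refl])
        fix k assume k: "k \<in> {Suc a..<b}"
        have "card (Conf a k) = Fr (k - a)" using less.IH[of "k - a"] k m by auto
        moreover have "card (Conf k b) = Fr (b - k)" using less.IH[of "b - k"] k m by auto
        ultimately show "2 * card (Conf a k) * ((if b = Suc k then 2 else 3) * card (Conf k b)) =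
          2 * Fr (k - a) * ((if b = Suc k then 2 else 3) * Fr (b - k))" by simp
      qed
      also have "\<dots> = (\<Sum>i\<in>{1..<m}. 2 * Fr i * ((if m = Suc i then 2 else 3) * Fr (m - i)))"
      proof -
        have e: "{Suc a..<b} = {1 + a..<m + a}" using m ab by auto
        show ?thesis unfolding e sum.shift_bounds_nat_ivl
          by (rule sum.cong[OF refl]) (use m ab in \<open>auto simp: add.commute\<close>)
      qed
      also have "\<dots> = Fr m" using Fr_rec[OF m2] by simp
      finally show ?thesis .
    qed
  qed
qed

lemma card_Conf_Fr: "a < b \<Longrightarrow> card (Conf a b) = Fr (b - a)"
  using card_Conf_Fr_aux by blast

lemma h_Fr: assumes "2 \<le> n" shows "h n = 2 * Fr n"
proof -
  have "BNC n = Cf (insert (1, n+1) (inner 1 (n+1))) (inner 1 (n+1) \<inter> nonedge)"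
  proof -
    have "arcs n = insert (1, n+1) (inner 1 (n+1))" using assms by (auto simp: arcs_def inner_def In_def)
    moreover have "diagonals n = inner 1 (n+1) \<inter> nonedge"
      by (auto simp: diagonals_def arcs_def inner_def In_def nonedge_def)
    ultimately show ?thesis by (simp add: BNC_def Cf_def)
  qed
  then have "card (BNC n) = 2 * card (Conf 1 (n+1))"
    using addarc.card2[OF addarc_inner] by (simp add: Conf_def)
  moreover have "card (Conf 1 (n+1)) = Fr n" using assms card_Conf_Fr[of 1 "n+1"] by simp
  ultimately show ?thesis using assms by (simp add: h_def)
qed

definition F :: "int fps" where "F = Abs_fps (\<lambda>n. int (Fr n))"

lemma HF: "H = 2 * F - fps_X"
proof (rule fps_ext)
  fix n
  show "H $ n = (2 * F - fps_X) $ n"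
  proof -
    consider "n = 0" | "n = 1" | "2 \<le> n" by linarith
    then show ?thesis
    proof cases
      case 1 then show ?thesis by (simp add: H_def F_def Fr_0 numeral_fps_const fps_X_def)
    next
      case 2 then show ?thesis by (simp add: H_def F_def Fr_1 Fr_Suc0 h_def numeral_fps_const fps_X_def)
    next
      case 3 then show ?thesis by (simp add: H_def F_def h_Fr numeral_fps_const fps_X_def)
    qed
  qed
qed

lemma Fr_conv: assumes "2 \<le> n"
  shows "int (Fr n) = 6 * (\<Sum>i=0..n. int (Fr i) * int (Fr (n - i))) - 2 * int (Fr (n - 1))"
proof -
  have "int (Fr n) = (\<Sum>k\<in>{1..<n}. 6 * (int (Fr k) * int (Fr (n - k))) - (if k = n - 1 then 2 * int (Fr k) else 0))"
    unfolding Fr_rec[OF assms] of_nat_sum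
  proof (rule sum.cong[OF refl])
    fix k assume k: "k \<in> {1..<n}"
    show "int (2 * Fr k * ((if n = Suc k then 2 else 3) * Fr (n - k))) =
      6 * (int (Fr k) * int (Fr (n - k))) - (if k = n - 1 then 2 * int (Fr k) else 0)"
    proof (cases "n = Suc k")
      case True then show ?thesis using Fr_1 by simp
    next
      case False
      then have "k \<noteq> n - 1" using k by auto
      then show ?thesis using False by simp
    qed
  qed
  also have "\<dots> = 6 * (\<Sum>k\<in>{1..<n}. int (Fr k) * int (Fr (n - k))) - 2 * int (Fr (n - 1))"
    using assms by (simp add: sum_subtractf sum_distrib_left)
  also have "(\<Sum>k\<in>{1..<n}. int (Fr k) * int (Fr (n - k))) = (\<Sum>i=0..n. int (Fr i) * int (Fr (n - i)))"
  proof (rule sum.mono_neutral_left)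
    show "\<forall>i\<in>{0..n} - {1..<n}. int (Fr i) * int (Fr (n - i)) = 0"
    proof
      fix i assume "i \<in> {0..n} - {1..<n}"
      then have "i = 0 \<or> i = n" by auto
      then show "int (Fr i) * int (Fr (n - i)) = 0" using Fr_0 by auto
    qed
  qed auto
  finally show ?thesis .
qed

lemma FE: "F = fps_X + 6 * (F * F) - 2 * (fps_X * F)"
proof (rule fps_ext)
  fix n
  show "F $ n = (fps_X + 6 * (F * F) - 2 * (fps_X * F)) $ n"
  proof -
    consider "n = 0" | "n = 1" | "2 \<le> n" by linarith
    then show ?thesis
    proof cases
      case 1 then show ?thesis by (simp add: F_def Fr_0 numeral_fps_const fps_X_def)
    next
      case 2 then show ?thesis by (simp add: F_def Fr_0 Fr_1 Fr_Suc0 numeral_fps_const fps_X_def)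
    next
      case 3
      have "(fps_X + 6 * (F * F) - 2 * (fps_X * F)) $ n = 6 * (F * F) $ n - 2 * F $ (n - 1)"
        using 3 by (simp add: numeral_fps_const)
      then show ?thesis using 3 Fr_conv[OF 3] by (simp add: F_def fps_mult_nth)
    qed
  qed
qed

theorem proposition2p9:
  shows "- fps_X - fps_X ^ 2 + (1 - 4 * fps_X) * H - 3 * H ^ 2 = (0 :: int fps)"
proof -
  have "- fps_X - fps_X ^ 2 + (1 - 4 * fps_X) * H - 3 * H ^ 2 =
     (-2) * (fps_X + 6 * (F * F) - 2 * (fps_X * F) - F)"
    unfolding HF by algebra
  also have "\<dots> = 0" using FE by simp
  finally show ?thesis .
qed

end
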